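(* Let $A$ be a Nakayama algebra which is a higher Auslander algebra of odd global dimension. Then for every odd indecomposable $A$-module $M$, the sequence $\operatorname{char}M=(c_1,\dots,c_m)$ consists of odd numbers and is weakly decreasing: $c_1\ge c_2\ge\cdots\ge c_m$. (Equivalently, with $S=\operatorname{top}M$: $\operatorname{pd}\tau^{m-1}S\ge\cdots\ge\operatorname{pd}\tau S\ge\operatorname{pd}S$.)
   Context: A Nakayama algebra is a basic $kQ/I$ ($k$ a field) with $Q$ a linearly oriented path or an oriented cycle; modules are finitely generated left modules, indecomposables uniserial; $\tau$ is the Auslander–Reiten translation. An indecomposable module is even/odd according to the parity of its projective dimension. For indecomposable $M$ with composition factors $F_1=\operatorname{soc}M,\dots,F_m=\operatorname{top}M$ (bottom to top), $\operatorname{char}M=(z_1,\dots,z_m)$ with $z_i=\operatorname{pd}F_i$ if $F_i$ odd and $z_i=\operatorname{pd}M$ if $F_i$ even. Higher Auslander algebra: global dimension equals dominant dimension (the number of initial projective terms of a minimal injective coresolution of ${}_AA$). *)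

theory Defs
  imports Main "HOL-Library.Extended_Nat"
begin

text \<open>Combinatorial model of a (connected, basic) Nakayama algebra A = kQ/I with n simples
S_0,...,S_(n-1).  The flag cyc says whether Q is an oriented cycle (True) or a linearly
oriented path (False); c is the Kupisch series: c i is the length of the indecomposable
projective P_i.  Convention: P_i has composition factors (top to bottom)
S_i, S_(i+1), ..., S_(i + c i - 1) (indices mod n).
An indecomposable module is encoded as a pair (i, l): the unique uniserial module with top S_i
and length l (1 \<le> l \<le> c i); the pair (i, 0) encodes the zero module.\<close>

definition is_nakayama :: "bool \<Rightarrow> nat \<Rightarrow> (nat \<Rightarrow> nat) \<Rightarrow> bool" where
  "is_nakayama cyc n c \<longleftrightarrow> n \<ge> 1 \<and>
     (if cyc then (\<forall>i<n. c i \<ge> 2 \<and> c ((i + 1) mod n) + 1 \<ge> c i)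
      else (c (n - 1) = 1 \<and> (\<forall>i. i + 1 < n \<longrightarrow> c i \<ge> 2 \<and> c (i + 1) + 1 \<ge> c i)))"

definition is_module :: "nat \<Rightarrow> (nat \<Rightarrow> nat) \<Rightarrow> nat \<times> nat \<Rightarrow> bool" where
  "is_module n c M \<longleftrightarrow> fst M < n \<and> 1 \<le> snd M \<and> snd M \<le> c (fst M)"

definition is_proj :: "(nat \<Rightarrow> nat) \<Rightarrow> nat \<times> nat \<Rightarrow> bool" where
  "is_proj c M \<longleftrightarrow> 0 < snd M \<and> snd M = c (fst M)"

definition syz :: "nat \<Rightarrow> (nat \<Rightarrow> nat) \<Rightarrow> nat \<times> nat \<Rightarrow> nat \<times> nat" where
  "syz n c M = (if snd M = 0 then M else ((fst M + snd M) mod n, c (fst M) - snd M))"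

definition pdim :: "nat \<Rightarrow> (nat \<Rightarrow> nat) \<Rightarrow> nat \<times> nat \<Rightarrow> enat" where
  "pdim n c M = (if \<exists>k. is_proj c ((syz n c ^^ k) M)
                 then enat (LEAST k. is_proj c ((syz n c ^^ k) M)) else \<infinity>)"

definition simple :: "nat \<Rightarrow> nat \<Rightarrow> nat \<times> nat" where
  "simple n i = (i mod n, 1)"

definition odd_module :: "nat \<Rightarrow> (nat \<Rightarrow> nat) \<Rightarrow> nat \<times> nat \<Rightarrow> bool" where
  "odd_module n c M \<longleftrightarrow> (\<exists>k. pdim n c M = enat k \<and> odd k)"

text \<open>composition factors F_1 = soc M, ..., F_m = top M (bottom to top)\<close>
definition comp_factors :: "nat \<Rightarrow> nat \<times> nat \<Rightarrow> (nat \<times> nat) list" where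
  "comp_factors n M = map (\<lambda>j. simple n (fst M + snd M - j)) [1..<snd M + 1]"

definition char_seq :: "nat \<Rightarrow> (nat \<Rightarrow> nat) \<Rightarrow> nat \<times> nat \<Rightarrow> enat list" where
  "char_seq n c M = map (\<lambda>F. if odd_module n c F then pdim n c F else pdim n c M) (comp_factors n M)"

text \<open>For a socle index s, the uniserial module of length l with socle S_s
has top S_(s-l+1); it exists iff ext_ok holds. The injective envelope of a module with socle
S_s is the longest such module.\<close>
definition ext_ok :: "bool \<Rightarrow> nat \<Rightarrow> (nat \<Rightarrow> nat) \<Rightarrow> nat \<Rightarrow> nat \<Rightarrow> bool" where
  "ext_ok cyc n c s l \<longleftrightarrow> 1 \<le> l \<and>
     (if cyc then l \<le> c ((s + n * l + 1 - l) mod n) else l \<le> s + 1 \<and> l \<le> c (s + 1 - l))"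

definition top_of :: "bool \<Rightarrow> nat \<Rightarrow> nat \<Rightarrow> nat \<Rightarrow> nat" where
  "top_of cyc n s l = (if cyc then (s + n * l + 1 - l) mod n else s + 1 - l)"

definition inj_env :: "bool \<Rightarrow> nat \<Rightarrow> (nat \<Rightarrow> nat) \<Rightarrow> nat \<times> nat \<Rightarrow> nat \<times> nat" where
  "inj_env cyc n c M =
     (let s = (fst M + snd M - 1) mod n; L = Max {l. ext_ok cyc n c s l} in (top_of cyc n s L, L))"

definition cosyz :: "bool \<Rightarrow> nat \<Rightarrow> (nat \<Rightarrow> nat) \<Rightarrow> nat \<times> nat \<Rightarrow> nat \<times> nat" where
  "cosyz cyc n c M = (if snd M = 0 then M else (fst (inj_env cyc n c M), snd (inj_env cyc n c M) - snd M))"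

text \<open>dominant dimension of an indecomposable module: number of initial projective terms
I_0, I_1, ... of its minimal injective coresolution (I_j = I(cosyz^j M)).\<close>
definition domdim_mod :: "bool \<Rightarrow> nat \<Rightarrow> (nat \<Rightarrow> nat) \<Rightarrow> nat \<times> nat \<Rightarrow> enat" where
  "domdim_mod cyc n c M =
     (if \<exists>j. 0 < snd ((cosyz cyc n c ^^ j) M) \<and> \<not> is_proj c (inj_env cyc n c ((cosyz cyc n c ^^ j) M))
      then enat (LEAST j. 0 < snd ((cosyz cyc n c ^^ j) M) \<and>
                     \<not> is_proj c (inj_env cyc n c ((cosyz cyc n c ^^ j) M)))
      else \<infinity>)"

text \<open>dominant dimension of A = direct sum of the P_i\<close>
definition domdim :: "bool \<Rightarrow> nat \<Rightarrow> (nat \<Rightarrow> nat) \<Rightarrow> enat" where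
  "domdim cyc n c = (INF i\<in>{..<n}. domdim_mod cyc n c (i, c i))"

definition gldim :: "nat \<Rightarrow> (nat \<Rightarrow> nat) \<Rightarrow> enat" where
  "gldim n c = (SUP M\<in>{M. is_module n c M}. pdim n c M)"

definition higher_auslander :: "bool \<Rightarrow> nat \<Rightarrow> (nat \<Rightarrow> nat) \<Rightarrow> bool" where
  "higher_auslander cyc n c \<longleftrightarrow> gldim n c = domdim cyc n c"

end

theory Submission
  imports Defs
begin


definition LE :: "('a \<Rightarrow> 'a) \<Rightarrow> ('a \<Rightarrow> bool) \<Rightarrow> 'a \<Rightarrow> enat" where
  "LE g p x = (if \<exists>k. p ((g ^^ k) x) then enat (LEAST k. p ((g ^^ k) x)) else \<infinity>)"

lemma LE_rec: "LE g p x = (if p x then 0 else eSuc (LE g p (g x)))"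
proof (cases "p x")
  case True
  then have "(LEAST k. p ((g ^^ k) x)) = 0" by (intro Least_eq_0) simp
  moreover have "\<exists>k. p ((g ^^ k) x)" using True by (intro exI[of _ 0]) simp
  ultimately show ?thesis using True unfolding LE_def by (simp add: zero_enat_def)
next
  case False
  have ex: "(\<exists>k. p ((g ^^ k) x)) \<longleftrightarrow> (\<exists>k. p ((g ^^ k) (g x)))"
  proof
    assume "\<exists>k. p ((g ^^ k) x)" then obtain k where k: "p ((g ^^ k) x)" by blast
    with False have "k \<noteq> 0" by (cases k) auto
    then obtain m where "k = Suc m" by (cases k) auto
    with k show "\<exists>k. p ((g ^^ k) (g x))" by (auto simp: funpow_Suc_right simp del: funpow.simps)
  next
    assume "\<exists>k. p ((g ^^ k) (g x))" then obtain k where "p ((g ^^ k) (g x))" by blast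
    then have "p ((g ^^ Suc k) x)" by (simp add: funpow_Suc_right del: funpow.simps)
    then show "\<exists>k. p ((g ^^ k) x)" by blast
  qed
  show ?thesis
  proof (cases "\<exists>k. p ((g ^^ k) (g x))")
    case True
    then obtain k where k: "p ((g ^^ k) (g x))" by blast
    have "(LEAST k. p ((g ^^ k) x)) = Suc (LEAST m. p ((g ^^ Suc m) x))"
      apply (rule Least_Suc[where n="Suc k"]) using k False by (simp_all add: funpow_Suc_right del: funpow.simps)
    moreover have "(\<lambda>m. p ((g ^^ Suc m) x)) = (\<lambda>m. p ((g ^^ m) (g x)))" by (simp add: funpow_Suc_right del: funpow.simps)
    ultimately show ?thesis using True ex False unfolding LE_def by (simp add: eSuc_enat)
  next
    case False2: False
    then show ?thesis using ex False unfolding LE_def by simp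
  qed
qed

lemma LE_lower: "enat d \<le> LE g p x \<Longrightarrow> j < d \<Longrightarrow> \<not> p ((g ^^ j) x)"
proof (induction j arbitrary: x d)
  case 0
  then show ?case by (subst (asm) LE_rec) (auto simp: zero_enat_def split: if_splits)
next
  case (Suc j)
  then obtain d' where d: "d = Suc d'" by (cases d) auto
  show ?case
  proof (cases "p x")
    case True then show ?thesis using Suc.prems by (subst (asm) LE_rec) (auto simp: zero_enat_def)
  next
    case False
    then have "enat (Suc d') \<le> eSuc (LE g p (g x))" using Suc.prems d by (subst (asm) LE_rec) auto
    then have "enat d' \<le> LE g p (g x)" by (simp add: eSuc_enat[symmetric])
    from Suc.IH[OF this] Suc.prems d show ?thesis by (simp add: funpow_Suc_right del: funpow.simps)
  qed
qed

locale zm =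
  fixes F :: "int \<Rightarrow> int" and d :: nat
  assumes monoF: "x \<le> y \<Longrightarrow> F x \<le> F y"
    and gtF: "x < F x"
    and lowF: "\<exists>x. F x < y"
begin

lemma h_ex: "\<exists>u. y \<le> F u \<and> (\<forall>v. y \<le> F v \<longrightarrow> u \<le> v)"
proof -
  obtain x where x: "F x < y" using lowF by blast
  define P where "P k \<longleftrightarrow> y \<le> F (x + int k)" for k :: nat
  have xy: "x < y" using gtF[of x] x by simp
  have "P (nat (y - x))" unfolding P_def using gtF[of y] xy by simp
  then have P0: "P (LEAST k. P k)" by (rule LeastI)
  show ?thesis
  proof (intro exI conjI allI impI)
    show "y \<le> F (x + int (LEAST k. P k))" using P0 unfolding P_def .
    fix v assume v: "y \<le> F v"
    have "x < v"
    proof (rule ccontr)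
      assume "\<not> x < v" then have "F v \<le> F x" using monoF by simp
      then show False using v x by simp
    qed
    then have "P (nat (v - x))" unfolding P_def using v by simp
    then have "(LEAST k. P k) \<le> nat (v - x)" by (rule Least_le)
    then show "x + int (LEAST k. P k) \<le> v" using \<open>x < v\<close> by simp
  qed
qed

definition h :: "int \<Rightarrow> int" where "h y = (SOME u. y \<le> F u \<and> (\<forall>v. y \<le> F v \<longrightarrow> u \<le> v))"

lemma h_prop: "y \<le> F (h y) \<and> (\<forall>v. y \<le> F v \<longrightarrow> h y \<le> v)"
  unfolding h_def by (rule someI_ex[OF h_ex])

lemma galois: "y \<le> F u \<longleftrightarrow> h y \<le> u"
  using h_prop[of y] monoF[of "h y" u] by auto

lemma F_h: "y \<le> F (h y)" using h_prop by blast

lemma h_le: "h y \<le> y - 1"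
  using galois[of y "y - 1"] gtF[of "y - 1"] by simp

lemma h_mono: "x \<le> y \<Longrightarrow> h x \<le> h y"
  using galois[of x "h y"] F_h[of y] by simp

lemma h_F: "h (F u) \<le> u" using galois[of "F u" u] by simp

definition J :: "int \<Rightarrow> bool" where "J p \<longleftrightarrow> F (p - 1) < F p"
definition X :: "int \<Rightarrow> bool" where "X y \<longleftrightarrow> F (h y) = y"

lemma X_F: "X (F u)"
  unfolding X_def using F_h[of "F u"] monoF[OF h_F[of u]] by simp

lemma hJ: "J p \<Longrightarrow> h (F p) = p"
proof -
  assume J: "J p"
  have "h (F p) \<le> p" by (rule h_F)
  moreover have "\<not> h (F p) \<le> p - 1"
  proof
    assume "h (F p) \<le> p - 1"
    then have "F p \<le> F (p - 1)" using galois by simp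
    then show False using J unfolding J_def by simp
  qed
  ultimately show ?thesis by simp
qed

lemma notJ_h: "\<not> J t \<Longrightarrow> h (F t) \<le> t - 1"
  unfolding J_def using galois[of "F t" "t - 1"] monoF[of "t - 1" t] by simp

definition PD :: "int \<Rightarrow> int \<Rightarrow> enat" where
  "PD a b = LE (\<lambda>ab. (snd ab, F (fst ab))) (\<lambda>ab. snd ab = F (fst ab)) (a, b)"

lemma PD_rec: "PD a b = (if b = F a then 0 else eSuc (PD b (F a)))"
  unfolding PD_def by (subst LE_rec) simp

fun zz :: "int \<Rightarrow> nat \<Rightarrow> int" where
  "zz t 0 = F t"
| "zz t (Suc 0) = t"
| "zz t (Suc (Suc j)) = h (zz t j)"

definition Co :: "int \<times> int \<Rightarrow> int \<times> int" where "Co ab = (h (snd ab), fst ab)"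

lemma Co_pair: "(Co ^^ j) (t, F t) = (zz t (Suc j), zz t j)"
proof (induction j)
  case 0 then show ?case by simp
next
  case (Suc j) then show ?case by (simp add: Co_def)
qed

lemma zz_mono: "zz t (Suc j) \<le> zz t j"
proof (induction j rule: less_induct)
  case (less j)
  show ?case
  proof (cases j)
    case 0 then show ?thesis using gtF[of t] by simp
  next
    case (Suc j')
    show ?thesis
    proof (cases j')
      case 0 then show ?thesis using Suc h_F[of t] by simp
    next
      case (Suc j'')
      then have "zz t (Suc j'') \<le> zz t j''" using less \<open>j = Suc j'\<close> by simp
      then show ?thesis using Suc \<open>j = Suc j'\<close> h_mono by simp
    qed
  qed
qed

lemma zz_X: "X (zz t j) \<Longrightarrow> F (zz t (Suc (Suc j))) = zz t j"
  unfolding X_def by simp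

lemma zz_top: "zz t j \<le> F (zz t (Suc j))"
proof (cases j)
  case 0 then show ?thesis by simp
next
  case (Suc j')
  then show ?thesis using zz_mono[of t j'] F_h[of "zz t j'"] by simp
qed

lemma zz_even: "zz t (2 * k) = (h ^^ k) (F t)"
  by (induction k) (simp_all add: funpow_swap1)

lemma zz_odd: "zz t (Suc (2 * k)) = (h ^^ k) t"
  by (induction k) (simp_all add: funpow_swap1)

end



context zm begin

lemma PD_0_iff: "PD a b = enat 0 \<longleftrightarrow> b = F a"
  by (subst PD_rec) (simp add: zero_enat_def[symmetric])

lemma PD_Suc_iff: "b \<noteq> F a \<Longrightarrow> PD a b = enat (Suc k) \<longleftrightarrow> PD b (F a) = enat k"
  by (subst PD_rec) (simp add: eSuc_enat[symmetric])

lemma PD_ne0: "PD a b = enat k \<Longrightarrow> 0 < k \<Longrightarrow> b \<noteq> F a"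
proof
  assume "PD a b = enat k" "0 < k" "b = F a"
  then have "PD a b = enat 0" using PD_0_iff[of a b] by blast
  then have "k = 0" using \<open>PD a b = enat k\<close> by simp
  then show False using \<open>0 < k\<close> by simp
qed

lemma PD_step: "b \<noteq> F a \<Longrightarrow> PD a b = eSuc (PD b (F a))"
  by (subst PD_rec) simp

end

locale zmha = zm +
  assumes Gl: "a < b \<Longrightarrow> b \<le> F a \<Longrightarrow> PD a b \<le> enat d"
    and oddd: "odd d"
    and Dom: "\<not> J t \<Longrightarrow> j < d \<Longrightarrow> (\<forall>i\<le>j. zz t (Suc i) < zz t i) \<Longrightarrow> X (zz t j)"
begin

lemma alive: "\<not> J t \<Longrightarrow> j \<le> d \<Longrightarrow> zz t (Suc j) < zz t j"
proof (induction j rule: less_induct)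
  case (less j)
  show ?case
  proof (cases j)
    case 0 then show ?thesis using gtF[of t] by simp
  next
    case (Suc j')
    show ?thesis
    proof (cases j')
      case 0 then show ?thesis using Suc notJ_h[OF less.prems(1)] by simp
    next
      case (Suc k)
      have al: "\<forall>i\<le>Suc k. zz t (Suc i) < zz t i" using less \<open>j = Suc j'\<close> Suc by auto
      have X1: "X (zz t (Suc k))" using Dom[OF less.prems(1), of "Suc k"] al less.prems \<open>j = Suc j'\<close> Suc by auto
      have X0: "X (zz t k)" using Dom[OF less.prems(1), of k] al less.prems \<open>j = Suc j'\<close> Suc by auto
      have e1: "F (zz t (Suc (Suc (Suc k)))) = zz t (Suc k)" using zz_X[OF X1] .
      have e0: "F (zz t (Suc (Suc k))) = zz t k" using zz_X[OF X0] .
      show ?thesis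
      proof (rule ccontr)
        assume "\<not> zz t (Suc j) < zz t j"
        then have "zz t (Suc j) = zz t j" using zz_mono[of t j] by simp
        then have "zz t (Suc k) = zz t k" using e1 e0 \<open>j = Suc j'\<close> Suc by metis
        then show False using al[rule_format, of k] by simp
      qed
    qed
  qed
qed

lemma Dom': "\<not> J t \<Longrightarrow> j < d \<Longrightarrow> X (zz t j)"
  using Dom alive by simp

lemma PD_chain: "\<not> J t \<Longrightarrow> j \<le> d \<Longrightarrow> PD (zz t (Suc j)) (zz t j) = enat j"
proof (induction j)
  case 0 then show ?case by (subst PD_rec) (simp add: zero_enat_def)
next
  case (Suc j)
  have "F (zz t (Suc (Suc j))) = zz t j" using zz_X[OF Dom'[OF Suc.prems(1)]] Suc.prems by simp
  moreover have "zz t (Suc j) < zz t j" using alive Suc.prems by simp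
  ultimately show ?case using Suc by (subst PD_rec) (simp add: eSuc_enat)
qed

lemma notX_d: "\<not> J t \<Longrightarrow> \<not> X (zz t d)"
proof
  assume nJ: "\<not> J t" and Xd: "X (zz t d)"
  obtain d' where d: "d = Suc d'" using oddd by (cases d) auto
  have Xd': "X (zz t d')" using Dom'[OF nJ] d by simp
  have e1: "F (zz t (Suc (Suc d))) = zz t d" using zz_X[OF Xd] .
  have e0: "F (zz t (Suc d)) = zz t d'" using zz_X[OF Xd'] d by simp
  have ad': "zz t d < zz t d'" using alive[OF nJ, of d'] d by simp
  have ad: "zz t (Suc d) < zz t d" using alive[OF nJ, of d] by simp
  show False
  proof (cases "zz t (Suc (Suc d)) = zz t (Suc d)")
    case True then show False using e1 e0 ad' by simp
  next
    case False
    then have lt: "zz t (Suc (Suc d)) < zz t (Suc d)" using zz_mono[of t "Suc d"] by simp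
    have "PD (zz t (Suc (Suc d))) (zz t (Suc d)) = eSuc (PD (zz t (Suc d)) (zz t d))"
      using e1 ad by (subst PD_rec) simp
    also have "\<dots> = enat (Suc d)" using PD_chain[OF nJ, of d] by (simp add: eSuc_enat)
    finally have "PD (zz t (Suc (Suc d))) (zz t (Suc d)) = enat (Suc d)" .
    moreover have "PD (zz t (Suc (Suc d))) (zz t (Suc d)) \<le> enat d"
      using Gl[OF lt] zz_top[of t "Suc d"] by simp
    ultimately show False by simp
  qed
qed

lemma orb: "\<not> J t \<Longrightarrow> 0 < j \<Longrightarrow> J ((F ^^ j) t)"
proof (induction j rule: less_induct)
  case (less j)
  define i where "i = d div 2"
  have d: "d = Suc (2 * i)" using oddd unfolding i_def by presburger
  define s where "s = (F ^^ j) t"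
  show ?case
  proof (rule ccontr)
    assume ns: "\<not> J ((F ^^ j) t)"
    have nX: "\<not> X ((h ^^ i) s)" using notX_d[OF ns] d zz_odd s_def by metis
    have hp: "k \<le> j - 1 \<Longrightarrow> (h ^^ k) s = (F ^^ (j - k)) t" for k
    proof (induction k)
      case 0 then show ?case by (simp add: s_def)
    next
      case (Suc k)
      have Jm: "J ((F ^^ (j - Suc k)) t)" using less.IH[of "j - Suc k"] less.prems Suc.prems by simp
      have "(h ^^ Suc k) s = h ((F ^^ (j - k)) t)" using Suc by simp
      also have "(F ^^ (j - k)) t = F ((F ^^ (j - Suc k)) t)"
      proof -
        have "j - k = Suc (j - Suc k)" using Suc.prems by simp
        then show ?thesis by simp
      qed
      finally show ?case using hJ[OF Jm] by simp
    qed
    show False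
    proof (cases "i \<le> j - 1")
      case True
      have "(h ^^ i) s = (F ^^ (j - i)) t" using hp[OF True] .
      also have "\<dots> = F ((F ^^ (j - i - 1)) t)"
      proof -
        have "j - i = Suc (j - i - 1)" using True less.prems(2) by simp
        then show ?thesis by simp
      qed
      finally show False using nX X_F by simp
    next
      case False
      have ii: "i = (i - (j - 1)) + (j - 1)" using False by simp
      have "(h ^^ i) s = (h ^^ ((i - (j - 1)) + (j - 1))) s" using ii by metis
      also have "\<dots> = (h ^^ (i - (j - 1))) ((h ^^ (j - 1)) s)" by (simp only: funpow_add o_apply)
      finally have "(h ^^ i) s = (h ^^ (i - (j - 1))) ((h ^^ (j - 1)) s)" .
      also have "(h ^^ (j - 1)) s = F t" using hp[of "j - 1"] less.prems(2) by simp
      finally have eq: "(h ^^ i) s = (h ^^ (i - (j - 1))) (F t)" .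
      have "X (zz t (2 * (i - (j - 1))))" using Dom'[OF less.prems(1)] d by simp
      then show False using nX eq zz_even by simp
    qed
  qed
qed

lemma even_nJ: "a < b \<Longrightarrow> b \<le> F a \<Longrightarrow> PD a b = enat (2 * j) \<Longrightarrow> 0 < j \<Longrightarrow> \<not> J ((F ^^ j) a)"
proof (induction j arbitrary: a b)
  case 0 then show ?case by simp
next
  case (Suc j)
  have bne: "b \<noteq> F a" using PD_ne0 Suc.prems(3) by simp
  then have p1: "PD b (F a) = enat (Suc (2 * j))" using Suc.prems(3) PD_Suc_iff by simp
  have fne: "F a \<noteq> F b" using PD_ne0[OF p1] by auto
  then have p2: "PD (F a) (F b) = enat (2 * j)" using p1 PD_Suc_iff by auto
  have lt: "F a < F b" using fne monoF[of a b] Suc.prems(1) by simp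
  have le: "F b \<le> F (F a)" using monoF Suc.prems(2) by simp
  show ?case
  proof (cases j)
    case 0
    then have "F b = F (F a)" using p2 PD_0_iff by simp
    moreover have "b \<le> F a - 1" using Suc.prems(2) bne by simp
    ultimately show ?thesis using 0 monoF[of b "F a - 1"] unfolding J_def by auto
  next
    case (Suc j')
    then have "\<not> J ((F ^^ j) (F a))" using Suc.IH[OF lt le p2] by simp
    then show ?thesis by (simp add: funpow_Suc_right del: funpow.simps)
  qed
qed

lemma K0: "\<not> J t \<Longrightarrow> t < x \<Longrightarrow> x < F t \<Longrightarrow> \<exists>q. PD t x = enat q \<and> odd q"
proof -
  assume nJ: "\<not> J t" and tx: "t < x" and xF: "x < F t"
  have "PD t x \<le> enat d" using Gl tx xF by simp
  then obtain q where q: "PD t x = enat q" by (cases "PD t x") auto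
  have "odd q"
  proof (rule ccontr)
    assume "\<not> odd q"
    then obtain j where j: "q = 2 * j" by auto
    show False
    proof (cases j)
      case 0
      then show False using q j xF PD_0_iff by simp
    next
      case (Suc j')
      then have "\<not> J ((F ^^ j) t)" using even_nJ[of t x j] tx xF q j by simp
      then show False using orb[OF nJ, of j] Suc by simp
    qed
  qed
  then show ?thesis using q by blast
qed

lemma BASE: "x < y \<Longrightarrow> y < z \<Longrightarrow> z \<le> F x \<Longrightarrow> F y = F z \<Longrightarrow> F x < F y \<Longrightarrow> \<exists>q. PD x z = enat q \<and> even q"
proof -
  assume xy: "x < y" and yz: "y < z" and zF: "z \<le> F x" and fyz: "F y = F z" and fxy: "F x < F y"
  show ?thesis
  proof (cases "z = F x")
    case True then show ?thesis by (subst PD_rec) (auto simp: zero_enat_def)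
  next
    case False
    have nJ: "\<not> J z" unfolding J_def using monoF[of y "z - 1"] monoF[of "z - 1" z] yz fyz by simp
    have zl: "z < F x" using zF False by simp
    have fl: "F x < F z" using fxy fyz by simp
    obtain q where q: "PD z (F x) = enat q" "odd q" using K0[OF nJ zl fl] by blast
    have "PD x z = eSuc (PD z (F x))" using False by (subst PD_rec) simp
    then show ?thesis using q by (simp add: eSuc_enat)
  qed
qed

lemma MAIN: "PD x z = enat (2 * p + 1) \<Longrightarrow> x < y \<Longrightarrow> y < z \<Longrightarrow> z \<le> F x \<Longrightarrow>
  \<exists>q r. PD x y = enat q \<and> PD y z = enat r \<and> odd q \<and> odd r \<and> q \<le> r"
proof (induction p arbitrary: x y z)
  case (0 x y z)
  have zne: "z \<noteq> F x" using "0.prems"(1) PD_ne0 by simp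
  then have p1: "PD z (F x) = enat 0" using "0.prems"(1) PD_Suc_iff by simp
  then have fxz: "F z = F x" using PD_0_iff by simp
  have fy: "F y = F x" using monoF[of x y] monoF[of y z] "0.prems" fxz by simp
  have "PD y (F x) = enat 0" using fy PD_0_iff by simp
  then have "PD x y = enat 1" using "0.prems" zne PD_step[of y x] by (simp add: eSuc_enat)
  moreover have "PD z (F y) = enat 0" using fy fxz PD_0_iff by simp
  then have "PD y z = enat 1" using "0.prems" zne fy PD_step[of z y] by (simp add: eSuc_enat)
  ultimately show ?case by auto
next
  case (Suc p x y z)
  have zne: "z \<noteq> F x" using Suc.prems(1) PD_ne0 by simp
  then have p1: "PD z (F x) = enat (2 * Suc p)" using Suc.prems(1) PD_Suc_iff by simp
  have fne: "F x \<noteq> F z" using PD_ne0[OF p1] by auto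
  then have p2: "PD (F x) (F z) = enat (2 * p + 1)" using p1 PD_Suc_iff by auto
  have zlt: "z < F x" using zne Suc.prems by simp
  have mxy: "F x \<le> F y" "F y \<le> F z" using monoF Suc.prems by auto
  have PDx: "F x \<noteq> F y \<Longrightarrow> PD x y = eSuc (eSuc (PD (F x) (F y)))"
    using zlt Suc.prems by (subst PD_rec) (simp add: PD_rec[of y "F x"])
  have PDy: "F y \<noteq> F z \<Longrightarrow> PD y z = eSuc (eSuc (PD (F y) (F z)))"
    using zlt Suc.prems mxy by (subst PD_rec) (simp add: PD_rec[of z "F y"])
  show ?case
  proof (cases "F x = F y")
    case True
    have "PD y (F x) = enat 0" using True PD_0_iff by simp
    then have "PD x y = enat 1" using zlt Suc.prems PD_step[of y x] by (simp add: eSuc_enat)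
    moreover have "PD y z = enat (2 * p + 3)" using PDy True fne p2 by (simp add: eSuc_enat)
    ultimately show ?thesis by auto
  next
    case False
    show ?thesis
    proof (cases "F y = F z")
      case True
      have "F x < F y" using False mxy by simp
      then obtain q where "PD x z = enat q" "even q" using BASE[of x y z] Suc.prems True by blast
      then have "even (2 * Suc p + 1)" using Suc.prems(1) by simp
      then show ?thesis by presburger
    next
      case False2: False
      have lt1: "F x < F y" "F y < F z" using False False2 mxy by auto
      have "F z \<le> F (F x)" using monoF Suc.prems by simp
      from Suc.IH[OF p2 lt1 this] obtain q r where qr: "PD (F x) (F y) = enat q" "PD (F y) (F z) = enat r" "odd q" "odd r" "q \<le> r" by blast
      show ?thesis using PDx[OF False] PDy[OF False2] qr by (intro exI[of _ "q + 2"] exI[of _ "r + 2"]) (simp add: eSuc_enat)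
    qed
  qed
qed

lemma oddE': "PD a b = enat k \<Longrightarrow> odd k \<Longrightarrow> \<exists>p. PD a b = enat (2 * p + 1)"
  by (metis oddE)

lemma SUB: "PD a b = enat k \<Longrightarrow> odd k \<Longrightarrow> a < b \<Longrightarrow> b \<le> F a \<Longrightarrow> a \<le> x \<Longrightarrow> x < y \<Longrightarrow> y \<le> b \<Longrightarrow>
  \<exists>q. PD x y = enat q \<and> odd q"
proof -
  assume ab: "PD a b = enat k" "odd k" "a < b" "b \<le> F a" and xy: "a \<le> x" "x < y" "y \<le> b"
  have xb: "\<exists>q. PD x b = enat q \<and> odd q"
  proof (cases "a = x")
    case True then show ?thesis using ab by auto
  next
    case False
    obtain p where "PD a b = enat (2 * p + 1)" using oddE' ab by blast
    then have "\<exists>q r. PD a x = enat q \<and> PD x b = enat r \<and> odd q \<and> odd r \<and> q \<le> r"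
      using MAIN[of a b p x] False xy ab by simp
    then show ?thesis by blast
  qed
  show ?thesis
  proof (cases "y = b")
    case True then show ?thesis using xb by simp
  next
    case False
    obtain q where q: "PD x b = enat q" "odd q" using xb by blast
    obtain p where p: "PD x b = enat (2 * p + 1)" using oddE'[OF q] by blast
    have "b \<le> F x" using monoF[of a x] xy ab by simp
    then have "\<exists>q r. PD x y = enat q \<and> PD y b = enat r \<and> odd q \<and> odd r \<and> q \<le> r"
      using MAIN[OF p, of y] False xy by simp
    then show ?thesis by blast
  qed
qed

lemma CHAIN: "PD a b = enat k \<Longrightarrow> odd k \<Longrightarrow> a < b \<Longrightarrow> b \<le> F a \<Longrightarrow> a \<le> u \<Longrightarrow> u \<le> v \<Longrightarrow> v < b \<Longrightarrow>
  PD u (u + 1) \<le> PD v (v + 1)"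
proof -
  assume ab: "PD a b = enat k" "odd k" "a < b" "b \<le> F a" and uv: "a \<le> u" "u \<le> v" "v < b"
  have step: "a \<le> w \<Longrightarrow> w + 2 \<le> b \<Longrightarrow> PD w (w + 1) \<le> PD (w + 1) (w + 2)" for w
  proof -
    assume w: "a \<le> w" "w + 2 \<le> b"
    obtain q where q: "PD w (w + 2) = enat q" "odd q" using SUB[OF ab, of w "w + 2"] w by auto
    obtain p where p: "PD w (w + 2) = enat (2 * p + 1)" using oddE'[OF q] by blast
    have "w + 2 \<le> F w" using monoF[of a w] w ab by simp
    moreover have "w < w + 1" "w + 1 < w + 2" by simp_all
    ultimately have "\<exists>q r. PD w (w + 1) = enat q \<and> PD (w + 1) (w + 2) = enat r \<and> odd q \<and> odd r \<and> q \<le> r"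
      using MAIN[OF p, of "w + 1"] by blast
    then have "\<exists>q r. PD w (w + 1) = enat q \<and> PD (w + 1) (w + 2) = enat r \<and> q \<le> r"
      by blast
    then show ?thesis by auto
  qed
  obtain m where m: "v = u + int m" using uv by (metis zle_iff_zadd)
  have "PD u (u + 1) \<le> PD (u + int m) (u + int m + 1)" if "u + int m < b" for m
    using that
  proof (induction m)
    case 0 then show ?case by simp
  next
    case (Suc m)
    have "PD u (u + 1) \<le> PD (u + int m) (u + int m + 1)" using Suc by simp
    also have "\<dots> \<le> PD (u + int m + 1) (u + int m + 2)" using step[of "u + int m"] Suc.prems uv by simp
    also have "u + int m + 1 = u + int (Suc m)" by simp
    also have "u + int m + 2 = u + int (Suc m) + 1" by simp
    finally show ?case .
  qed
  then show ?thesis using m uv by simp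
qed

end


definition FF :: "bool \<Rightarrow> nat \<Rightarrow> (nat \<Rightarrow> nat) \<Rightarrow> int \<Rightarrow> int" where
  "FF cyc n c x = (if cyc then x + int (c (nat (x mod int n)))
                  else if 0 \<le> x \<and> x < int n then x + int (c (nat x)) else x + 1)"

definition vld :: "bool \<Rightarrow> nat \<Rightarrow> int \<Rightarrow> bool" where
  "vld cyc n a \<longleftrightarrow> cyc \<or> (0 \<le> a \<and> a < int n)"

definition rep :: "nat \<Rightarrow> int \<Rightarrow> int \<Rightarrow> nat \<times> nat" where
  "rep n a b = (nat (a mod int n), nat (b - a))"

locale conc =
  fixes cyc :: bool and n :: nat and c :: "nat \<Rightarrow> nat" and d :: nat
  assumes nak: "is_nakayama cyc n c"
begin

lemma n_pos: "1 \<le> n" using nak unfolding is_nakayama_def by simp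

lemma cyc_c: "cyc \<Longrightarrow> i < n \<Longrightarrow> 2 \<le> c i \<and> c i \<le> c ((i + 1) mod n) + 1"
  using nak unfolding is_nakayama_def by auto

lemma lin_c: "\<not> cyc \<Longrightarrow> c (n - 1) = 1"
  using nak unfolding is_nakayama_def by auto

lemma lin_c2: "\<not> cyc \<Longrightarrow> i + 1 < n \<Longrightarrow> 2 \<le> c i \<and> c i \<le> c (i + 1) + 1"
  using nak unfolding is_nakayama_def by auto

lemma lin_bound: "\<not> cyc \<Longrightarrow> i < n \<Longrightarrow> i + c i \<le> n"
proof -
  assume nc: "\<not> cyc" and i: "i < n"
  have "\<forall>i. n - 1 - i = k \<longrightarrow> i < n \<longrightarrow> i + c i \<le> n" for k
  proof (induction k)
    case 0
    show ?case
    proof (intro allI impI)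
      fix i assume "n - 1 - i = 0" "i < n"
      then have "i = n - 1" by simp
      then show "i + c i \<le> n" using lin_c[OF nc] n_pos by simp
    qed
  next
    case (Suc k)
    show ?case
    proof (intro allI impI)
      fix i assume a: "n - 1 - i = Suc k" "i < n"
      then have "n - 1 - (i + 1) = k" "i + 1 < n" by auto
      then have "i + 1 + c (i + 1) \<le> n" using Suc by blast
      moreover have "c i \<le> c (i + 1) + 1" using lin_c2[OF nc \<open>i + 1 < n\<close>] by simp
      ultimately show "i + c i \<le> n" by simp
    qed
  qed
  then show ?thesis using i by blast
qed

lemma c_pos: "i < n \<Longrightarrow> 1 \<le> c i"
proof (cases cyc)
  case True then show "i < n \<Longrightarrow> 1 \<le> c i" using cyc_c by force
next
  case False
  assume i: "i < n"
  show ?thesis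
  proof (cases "i + 1 < n")
    case True then show ?thesis using lin_c2[OF False] by force
  next
    case False2: False
    then have "i = n - 1" using i by simp
    then show ?thesis using lin_c[OF False] by simp
  qed
qed

abbreviation F where "F \<equiv> FF cyc n c"

lemma F_eq: "vld cyc n a \<Longrightarrow> F a = a + int (c (nat (a mod int n)))"
  unfolding FF_def vld_def by auto

lemma mod_lt: "nat (a mod int n) < n"
  using n_pos by (simp add: nat_less_iff)

lemma F_gt: "x < F x"
proof (cases cyc)
  case True
  then show ?thesis using c_pos[OF mod_lt[of x]] unfolding FF_def by simp
next
  case False
  then show ?thesis using c_pos[of "nat x"] unfolding FF_def by (auto simp: nat_less_iff)
qed

lemma F_step: "F x \<le> F (x + 1)"
proof (cases cyc)
  case True
  define i where "i = nat (x mod int n)"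
  have i: "i < n" using mod_lt i_def by simp
  have "int (nat ((x + 1) mod int n)) = (x + 1) mod int n" using n_pos by simp
  also have "\<dots> = (int i + 1) mod int n" unfolding i_def using n_pos by (simp add: mod_add_left_eq)
  also have "\<dots> = int ((i + 1) mod n)" by (simp add: zmod_int add.commute)
  finally have "int (nat ((x + 1) mod int n)) = int ((i + 1) mod n)" .
  then have e: "nat ((x + 1) mod int n) = (i + 1) mod n" by (simp only: of_nat_eq_iff)
  have "c i \<le> c ((i + 1) mod n) + 1" using cyc_c[OF True i] by simp
  then show ?thesis using True e unfolding FF_def i_def[symmetric] by simp
next
  case False
  show ?thesis
  proof (cases "x < -1")
    case True then show ?thesis using False unfolding FF_def by simp
  next
    case F1: False
    show ?thesis
    proof (cases "x = -1")
      case True then show ?thesis using False n_pos c_pos[of 0] unfolding FF_def by simp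
    next
      case F2: False
      then have x0: "0 \<le> x" using F1 by simp
      show ?thesis
      proof (cases "x + 1 < int n")
        case True
        have "nat x + 1 < n" using True x0 by simp
        then have "c (nat x) \<le> c (nat x + 1) + 1" using lin_c2[OF False] by simp
        moreover have "nat (x + 1) = nat x + 1" using x0 by simp
        ultimately show ?thesis using False True x0 unfolding FF_def by simp
      next
        case F3: False
        show ?thesis
        proof (cases "x < int n")
          case True
          then have "x = int n - 1" using F3 by simp
          then have "nat x = n - 1" by simp
          then show ?thesis using False True x0 lin_c[OF False] unfolding FF_def by simp
        next
          case False4: False
          then show ?thesis using False unfolding FF_def by simp
        qed
      qed
    qed
  qed
qed

lemma F_mono: "x \<le> y \<Longrightarrow> F x \<le> F y"
proof -
  assume "x \<le> y"
  then obtain k where k: "y = x + int k" by (metis zle_iff_zadd)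
  have "F x \<le> F (x + int k)" for k
  proof (induction k)
    case 0 then show ?case by simp
  next
    case (Suc k)
    have "x + int (Suc k) = x + int k + 1" by simp
    then show ?case using Suc F_step[of "x + int k"] by (metis order_trans)
  qed
  then show ?thesis using k by simp
qed

lemma F_low: "\<exists>x. F x < y"
proof (cases cyc)
  case True
  define C where "C = (\<Sum>i<n. c i)"
  have "c (nat (x mod int n)) \<le> C" for x
    unfolding C_def by (rule member_le_sum) (use mod_lt in auto)
  then have "F (y - int C - 1) < y" using True unfolding FF_def by (smt (verit) of_nat_mono)
  then show ?thesis by blast
next
  case False
  have "F (min y 0 - 2) < y" using False unfolding FF_def by simp
  then show ?thesis by blast
qed

sublocale zm F d
  by unfold_locales (auto intro: F_mono F_gt F_low)


lemma vld_F_le: "\<not> cyc \<Longrightarrow> vld cyc n a \<Longrightarrow> F a \<le> int n"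
proof -
  assume nc: "\<not> cyc" and v: "vld cyc n a"
  then have a: "0 \<le> a" "a < int n" unfolding vld_def by auto
  then have "nat a + c (nat a) \<le> n" using lin_bound[OF nc, of "nat a"] by simp
  then show ?thesis using a nc unfolding FF_def by simp
qed

lemma is_module_rep: "vld cyc n a \<Longrightarrow> a < b \<Longrightarrow> b \<le> F a \<Longrightarrow> is_module n c (rep n a b)"
  unfolding is_module_def rep_def using F_eq[of a] mod_lt[of a] by auto

lemma is_proj_rep: "vld cyc n a \<Longrightarrow> a < b \<Longrightarrow> is_proj c (rep n a b) \<longleftrightarrow> b = F a"
  unfolding is_proj_def rep_def using F_eq[of a] by auto

lemma syz_rep: "vld cyc n a \<Longrightarrow> a < b \<Longrightarrow> b < F a \<Longrightarrow> syz n c (rep n a b) = rep n b (F a) \<and> vld cyc n b"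
proof -
  assume v: "vld cyc n a" and ab: "a < b" and bF: "b < F a"
  have n0: "0 < int n" using n_pos by simp
  have e1: "nat (a mod int n) + nat (b - a) = nat (a mod int n + (b - a))" using ab n0 by (simp add: nat_add_distrib)
  have e2: "(a mod int n + (b - a)) mod int n = b mod int n" by (simp add: mod_add_left_eq)
  have e3: "nat (a mod int n + (b - a)) mod n = nat (b mod int n)"
    using e2 n0 ab by (metis nat_int nat_mod_distrib add_nonneg_nonneg pos_mod_sign diff_ge_0_iff_ge less_imp_le of_nat_0_le_iff)
  have e4: "c (nat (a mod int n)) - nat (b - a) = nat (F a - b)"
  proof -
    have "nat (F a - b) = nat (int (c (nat (a mod int n))) - (b - a))" using F_eq[OF v] by simp
    also have "\<dots> = nat (int (c (nat (a mod int n)))) - nat (b - a)"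
      by (rule nat_diff_distrib) (use ab bF F_eq[OF v] in auto)
    finally show ?thesis by simp
  qed
  have "syz n c (rep n a b) = rep n b (F a)" unfolding syz_def rep_def using ab e1 e3 e4 by simp
  moreover have "vld cyc n b"
  proof (cases cyc)
    case True then show ?thesis unfolding vld_def by simp
  next
    case False
    then show ?thesis using v ab bF vld_F_le[OF False v] unfolding vld_def by simp
  qed
  ultimately show ?thesis by simp
qed

lemma pdim_rep: "vld cyc n a \<Longrightarrow> a < b \<Longrightarrow> b \<le> F a \<Longrightarrow> pdim n c (rep n a b) = PD a b"
proof -
  have pL: "pdim n c M = LE (syz n c) (is_proj c) M" for M unfolding pdim_def LE_def by simp
  have key: "\<forall>a b. vld cyc n a \<longrightarrow> a < b \<longrightarrow> b \<le> F a \<longrightarrow> (pdim n c (rep n a b) = enat k \<longleftrightarrow> PD a b = enat k)" for k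
  proof (induction k)
    case 0
    show ?case
    proof (intro allI impI)
      fix a b assume v: "vld cyc n a" "a < b" "b \<le> F a"
      have "pdim n c (rep n a b) = enat 0 \<longleftrightarrow> is_proj c (rep n a b)"
        unfolding pL by (subst LE_rec) (simp add: zero_enat_def[symmetric])
      then show "pdim n c (rep n a b) = enat 0 \<longleftrightarrow> PD a b = enat 0" using is_proj_rep v PD_0_iff by simp
    qed
  next
    case (Suc k)
    show ?case
    proof (intro allI impI)
      fix a b assume v: "vld cyc n a" "a < b" "b \<le> F a"
      show "pdim n c (rep n a b) = enat (Suc k) \<longleftrightarrow> PD a b = enat (Suc k)"
      proof (cases "b = F a")
        case True
        have "pdim n c (rep n a b) = 0" unfolding pL using True is_proj_rep v by (subst LE_rec) simp
        moreover have "PD a b = 0" using True by (subst PD_rec) simp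
        ultimately show ?thesis by (simp add: zero_enat_def)
      next
        case False
        then have bl: "b < F a" using v by simp
        have np: "\<not> is_proj c (rep n a b)" using is_proj_rep v False by simp
        have s: "syz n c (rep n a b) = rep n b (F a)" "vld cyc n b" using syz_rep v bl by auto
        have "pdim n c (rep n a b) = eSuc (pdim n c (rep n b (F a)))"
          unfolding pL using np s by (subst LE_rec) simp
        moreover have "PD a b = eSuc (PD b (F a))" using False by (rule PD_step)
        moreover have "F a \<le> F b" using monoF v by simp
        ultimately show ?thesis using Suc.IH s(2) bl by (simp add: eSuc_enat[symmetric])
      qed
    qed
  qed
  assume v: "vld cyc n a" "a < b" "b \<le> F a"
  show ?thesis
  proof (cases "PD a b")
    case (enat k) then show ?thesis using key[of k] v by simp
  next
    case infinity
    show ?thesis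
    proof (cases "pdim n c (rep n a b)")
      case (enat k) then show ?thesis using key[of k] v infinity by simp
    next
      case infinity then show ?thesis using \<open>PD a b = \<infinity>\<close> by simp
    qed
  qed
qed

lemma F_per: "cyc \<Longrightarrow> F (u + int n * q) = F u + int n * q"
  unfolding FF_def by simp

lemma h_per: "cyc \<Longrightarrow> h (y + int n * q) = h y + int n * q"
proof -
  assume cy: cyc
  have A: "y + int n * q \<le> F u \<longleftrightarrow> h y + int n * q \<le> u" for u
  proof -
    have "F u = F (u - int n * q) + int n * q" using F_per[OF cy, of "u - int n * q" q] by simp
    then have "y + int n * q \<le> F u \<longleftrightarrow> y \<le> F (u - int n * q)" by simp
    also have "\<dots> \<longleftrightarrow> h y \<le> u - int n * q" by (rule galois)
    finally show ?thesis by arith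
  qed
  have "h (y + int n * q) \<le> h y + int n * q" using A[of "h y + int n * q"] galois by simp
  moreover have "h y + int n * q \<le> h (y + int n * q)" using A[of "h (y + int n * q)"] galois by simp
  ultimately show ?thesis by simp
qed

lemma Max_init: "1 \<le> K \<Longrightarrow> Max {l::nat. 1 \<le> l \<and> int l \<le> K} = nat K"
proof -
  assume K: "1 \<le> K"
  have fin: "finite {l::nat. 1 \<le> l \<and> int l \<le> K}"
    by (rule finite_subset[of _ "{..nat K}"]) auto
  show ?thesis
    by (rule Max_eqI[OF fin]) (use K in auto)
qed


lemma modc: "int ((s + n * l' + 1 - l') mod n) = (int s + 1 - int l') mod int n"
proof -
  have le: "1 * l' \<le> n * l'" using mult_le_mono1[OF n_pos, of l'] .
  then have le2: "l' \<le> s + n * l' + 1" by linarith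
  have "int (s + n * l' + 1 - l') = int (s + n * l' + 1) - int l'" using le2 by (rule of_nat_diff)
  then have "int (s + n * l' + 1 - l') = int s + 1 - int l' + int n * int l'" by simp
  then have "int (s + n * l' + 1 - l') mod int n = (int s + 1 - int l') mod int n" by simp
  then show ?thesis by (simp add: zmod_int)
qed

lemma inj_env_rep: "vld cyc n x \<Longrightarrow> x < y \<Longrightarrow> y \<le> F x \<Longrightarrow>
  inj_env cyc n c (rep n x y) = rep n (h y) y \<and> vld cyc n (h y)"
proof -
  assume v: "vld cyc n x" and xy: "x < y" and yF: "y \<le> F x"
  have hy1: "h y \<le> y - 1" by (rule h_le)
  have hyx: "h y \<le> x" using galois yF by simp
  define s where "s = (nat (x mod int n) + nat (y - x) - 1) mod n"
  have K: "1 \<le> y - h y" using hy1 by simp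
  have main: "(\<forall>l'. ext_ok cyc n c s l' \<longleftrightarrow> (1 \<le> l' \<and> int l' \<le> y - h y))
       \<and> top_of cyc n s (nat (y - h y)) = nat (h y mod int n) \<and> vld cyc n (h y)"
    proof (cases cyc)
      case True
      have n0: "0 < int n" using n_pos by simp
      have "int (nat (x mod int n) + nat (y - x) - 1) = x mod int n + (y - x) - 1"
        using xy n0 by (simp add: of_nat_diff)
      then have "int s = (x mod int n + (y - x) - 1) mod int n" unfolding s_def by (simp add: zmod_int)
      also have "x mod int n + (y - x) - 1 = x mod int n + (y - x - 1)" by simp
      also have "(x mod int n + (y - x - 1)) mod int n = (x + (y - x - 1)) mod int n" by (rule mod_add_left_eq)
      also have "x + (y - x - 1) = y - 1" by simp
      finally have si: "int s = (y - 1) mod int n" .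
      define q where "q = (y - 1) div int n"
      define Y where "Y = int s + 1"
      have Yq: "y = Y + int n * q" unfolding Y_def q_def si
        using div_mult_mod_eq[of "y - 1" "int n"] by (simp add: algebra_simps)
      have hY: "h y = h Y + int n * q" using h_per[OF True] Yq by simp
      have e1: "l' \<le> c ((s + n * l' + 1 - l') mod n) \<longleftrightarrow> int l' \<le> y - h y" for l'
      proof -
        have "(s + n * l' + 1 - l') mod n = nat ((Y - int l') mod int n)"
          using modc[of s l'] unfolding Y_def by (metis nat_int)
        moreover have "F (Y - int l') = Y - int l' + int (c (nat ((Y - int l') mod int n)))"
          using F_eq True unfolding vld_def by simp
        ultimately have "l' \<le> c ((s + n * l' + 1 - l') mod n) \<longleftrightarrow> Y \<le> F (Y - int l')" by simp
        also have "\<dots> \<longleftrightarrow> h Y \<le> Y - int l'" by (rule galois)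
        finally have "l' \<le> c ((s + n * l' + 1 - l') mod n) \<longleftrightarrow> h Y \<le> Y - int l'" .
        moreover have "y - h y = Y - h Y" using Yq hY by simp
        ultimately show ?thesis by arith
      qed
      have e2: "top_of cyc n s (nat (y - h y)) = nat (h y mod int n)"
      proof -
        have "int (top_of cyc n s (nat (y - h y))) = (int s + 1 - int (nat (y - h y))) mod int n"
          using True modc unfolding top_of_def by simp
        also have "\<dots> = (h y + int n * (- q)) mod int n" using K Yq hY unfolding Y_def by simp
        also have "\<dots> = h y mod int n" by (rule mod_mult_self2)
        finally show ?thesis by (metis nat_int)
      qed
      show ?thesis using e1 e2 True unfolding ext_ok_def vld_def by auto
    next
      case False
      have x0: "0 \<le> x" "x < int n" using v False unfolding vld_def by auto
      have yn: "y \<le> int n" using yF vld_F_le[OF False v] by simp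
      have "nat (x mod int n) = nat x" using x0 by simp
      then have s_eq: "s = nat (y - 1)" unfolding s_def using x0 xy yn by (simp add: nat_diff_distrib)
      have Fm1: "F (-1) = 0" using False unfolding FF_def by simp
      have hy0: "0 \<le> h y"
      proof (rule ccontr)
        assume "\<not> 0 \<le> h y"
        then have "h y \<le> -1" by simp
        then have "y \<le> F (-1)" using galois by simp
        then show False using Fm1 xy x0 by simp
      qed
      have e1: "1 \<le> l' \<Longrightarrow> (l' \<le> s + 1 \<and> l' \<le> c (s + 1 - l')) \<longleftrightarrow> int l' \<le> y - h y" for l'
      proof (cases "l' \<le> s + 1")
        case True
        define u where "u = y - int l'"
        assume l1: "1 \<le> l'"
        have u: "0 \<le> u" "u < int n" "nat u = s + 1 - l'" using True s_eq xy x0 yn l1 unfolding u_def by auto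
        have "F u = u + int (c (nat u))" using False u unfolding FF_def by simp
        then have "l' \<le> c (s + 1 - l') \<longleftrightarrow> y \<le> F u" using u unfolding u_def by auto
        also have "\<dots> \<longleftrightarrow> h y \<le> u" by (rule galois)
        finally show ?thesis using True unfolding u_def by auto
      next
        case F2: False
        then show ?thesis using hy0 s_eq xy x0 by auto
      qed
      have e2: "top_of cyc n s (nat (y - h y)) = nat (h y mod int n)"
      proof -
        have "h y mod int n = h y" using hy0 hy1 yn by simp
        then show ?thesis using False s_eq hy0 hy1 xy x0 unfolding top_of_def by (simp add: nat_diff_distrib)
      qed
      have "vld cyc n (h y)" using hy0 hy1 yn unfolding vld_def by simp
      then show ?thesis using e1 e2 False unfolding ext_ok_def by auto
  qed
  have ext: "ext_ok cyc n c s l' \<longleftrightarrow> (1 \<le> l' \<and> int l' \<le> y - h y)" for l' using main by blast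
  have top: "top_of cyc n s (nat (y - h y)) = nat (h y mod int n)" using main by blast
  have vh: "vld cyc n (h y)" using main by blast
  have "{l. ext_ok cyc n c s l} = {l. 1 \<le> l \<and> int l \<le> y - h y}" using ext by auto
  then have "Max {l. ext_ok cyc n c s l} = nat (y - h y)" using Max_init[OF K] by simp
  then have "inj_env cyc n c (rep n x y) = (nat (h y mod int n), nat (y - h y))"
    unfolding inj_env_def rep_def Let_def s_def[symmetric] using top s_def by simp
  then show ?thesis using vh unfolding rep_def by simp
qed


lemma cosyz_rep: "vld cyc n x \<Longrightarrow> x < y \<Longrightarrow> y \<le> F x \<Longrightarrow> cosyz cyc n c (rep n x y) = rep n (h y) x"
proof -
  assume v: "vld cyc n x" "x < y" "y \<le> F x"
  have hyx: "h y \<le> x" using galois v by simp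
  have ie: "inj_env cyc n c (rep n x y) = rep n (h y) y" using inj_env_rep v by simp
  have "nat (y - h y) - nat (y - x) = nat (x - h y)" using hyx v by (simp add: nat_diff_distrib[symmetric])
  then show ?thesis unfolding cosyz_def using ie v unfolding rep_def by simp
qed

lemma Q_rep: "vld cyc n x \<Longrightarrow> x < y \<Longrightarrow> y \<le> F x \<Longrightarrow>
  (0 < snd (rep n x y) \<and> \<not> is_proj c (inj_env cyc n c (rep n x y))) \<longleftrightarrow> \<not> X y"
proof -
  assume v: "vld cyc n x" "x < y" "y \<le> F x"
  have ie: "inj_env cyc n c (rep n x y) = rep n (h y) y" "vld cyc n (h y)" using inj_env_rep v by auto
  have hy: "h y < y" using h_le[of y] by simp
  have "is_proj c (rep n (h y) y) \<longleftrightarrow> y = F (h y)" using is_proj_rep[OF ie(2) hy] .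
  then show ?thesis using ie v unfolding rep_def X_def by auto
qed

lemma nJ_vld: "\<not> J t \<Longrightarrow> vld cyc n t"
proof (rule ccontr)
  assume nJ: "\<not> J t" and nv: "\<not> vld cyc n t"
  then have nc: "\<not> cyc" and t: "t < 0 \<or> int n \<le> t" unfolding vld_def by auto
  have "F (t - 1) < F t"
  proof (cases "t < 0")
    case True then show ?thesis using nc unfolding FF_def by simp
  next
    case False
    then have tn: "int n \<le> t" using t by simp
    show ?thesis
    proof (cases "t = int n")
      case True
      have "nat (t - 1) = n - 1" using True by simp
      moreover have "nat (t - 1) + c (nat (t - 1)) \<le> n" using lin_bound[OF nc, of "nat (t - 1)"] True n_pos by simp
      ultimately show ?thesis using nc True n_pos lin_c[OF nc] unfolding FF_def by simp
    next
      case False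
      then show ?thesis using nc tn unfolding FF_def by simp
    qed
  qed
  then show False using nJ unfolding J_def by simp
qed

lemma sim: "\<not> J t \<Longrightarrow> (\<forall>i<j. zz t (Suc i) < zz t i) \<Longrightarrow>
  (cosyz cyc n c ^^ j) (rep n t (F t)) = rep n (zz t (Suc j)) (zz t j) \<and> vld cyc n (zz t (Suc j))"
proof (induction j)
  case 0 then show ?case using nJ_vld by simp
next
  case (Suc j)
  then have IH: "(cosyz cyc n c ^^ j) (rep n t (F t)) = rep n (zz t (Suc j)) (zz t j)" "vld cyc n (zz t (Suc j))" by auto
  have lt: "zz t (Suc j) < zz t j" using Suc.prems by simp
  have top: "zz t j \<le> F (zz t (Suc j))" by (rule zz_top)
  have "(cosyz cyc n c ^^ Suc j) (rep n t (F t)) = rep n (h (zz t j)) (zz t (Suc j))"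
    using cosyz_rep[OF IH(2) lt top] IH(1) by simp
  moreover have "vld cyc n (h (zz t j))" using inj_env_rep[OF IH(2) lt top] by simp
  ultimately show ?case by simp
qed

end

locale conc2 = conc +
  assumes ha: "higher_auslander cyc n c" and gl: "gldim n c = enat d" and od: "odd d"
begin

lemma Gl': "a < b \<Longrightarrow> b \<le> F a \<Longrightarrow> PD a b \<le> enat d"
proof (cases "vld cyc n a")
  case True
  assume ab: "a < b" "b \<le> F a"
  have "pdim n c (rep n a b) \<le> gldim n c" unfolding gldim_def
    by (rule SUP_upper) (use is_module_rep[OF True ab] in simp)
  then show ?thesis using pdim_rep[OF True ab] gl by simp
next
  case False
  assume ab: "a < b" "b \<le> F a"
  have "F a = a + 1" using False unfolding FF_def vld_def by auto
  then have "b = F a" using ab by simp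
  then have "PD a b = 0" by (subst PD_rec) simp
  then show ?thesis by simp
qed

lemma Dom'': "\<not> J t \<Longrightarrow> j < d \<Longrightarrow> (\<forall>i\<le>j. zz t (Suc i) < zz t i) \<Longrightarrow> X (zz t j)"
proof -
  assume nJ: "\<not> J t" and jd: "j < d" and al: "\<forall>i\<le>j. zz t (Suc i) < zz t i"
  have vt: "vld cyc n t" using nJ_vld nJ by simp
  define i0 where "i0 = nat (t mod int n)"
  have i0: "i0 < n" unfolding i0_def by (rule mod_lt)
  have r: "rep n t (F t) = (i0, c i0)" unfolding rep_def i0_def using F_eq[OF vt] by simp
  have "domdim cyc n c = enat d" using ha gl unfolding higher_auslander_def by simp
  moreover have "domdim cyc n c \<le> domdim_mod cyc n c (i0, c i0)" unfolding domdim_def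
    by (rule INF_lower) (use i0 in simp)
  ultimately have "enat d \<le> LE (cosyz cyc n c) (\<lambda>N. 0 < snd N \<and> \<not> is_proj c (inj_env cyc n c N)) (rep n t (F t))"
    unfolding r domdim_mod_def LE_def by simp
  from LE_lower[OF this jd] have nq: "\<not> (0 < snd ((cosyz cyc n c ^^ j) (rep n t (F t))) \<and>
      \<not> is_proj c (inj_env cyc n c ((cosyz cyc n c ^^ j) (rep n t (F t)))))" .
  have s: "(cosyz cyc n c ^^ j) (rep n t (F t)) = rep n (zz t (Suc j)) (zz t j)" "vld cyc n (zz t (Suc j))"
    using sim[OF nJ] al by auto
  have lt: "zz t (Suc j) < zz t j" using al by simp
  show ?thesis using nq Q_rep[OF s(2) lt zz_top] s(1) by simp
qed

sublocale zmha F d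
proof unfold_locales
  show "odd d" by (rule od)
qed (auto intro: Gl' Dom'')

lemma final: "is_module n c M \<Longrightarrow> odd_module n c M \<Longrightarrow>
  (\<forall>z\<in>set (char_seq n c M). \<exists>k. z = enat k \<and> odd k) \<and> sorted_wrt (\<ge>) (char_seq n c M)"
proof -
  assume modM: "is_module n c M" and oddM: "odd_module n c M"
  obtain i l where M: "M = (i, l)" by (cases M)
  have il: "i < n" "1 \<le> l" "l \<le> c i" using modM M unfolding is_module_def by auto
  define a where "a = int i"
  define b where "b = int i + int l"
  have va: "vld cyc n a" unfolding vld_def a_def using il by simp
  have ra: "rep n a b = M" unfolding rep_def a_def b_def M using il by simp
  have Fa: "F a = int i + int (c i)" using F_eq[OF va] il unfolding a_def by simp
  have ab: "a < b" "b \<le> F a" using il Fa unfolding a_def b_def by auto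
  obtain k where k: "PD a b = enat k" "odd k" using oddM pdim_rep[OF va ab] ra unfolding odd_module_def by auto
  define g where "g j = PD (int (i + l - j)) (int (i + l - j) + 1)" for j
  have ent: "(if odd_module n c (simple n (i + l - j)) then pdim n c (simple n (i + l - j)) else pdim n c M) = g j
     \<and> (\<exists>q. g j = enat q \<and> odd q)" if j: "1 \<le> j" "j \<le> l" for j
  proof -
    define u where "u = i + l - j"
    have u: "i \<le> u" "u < i + l" using j unfolding u_def by auto
    have vu: "vld cyc n (int u)"
    proof (cases cyc)
      case True then show ?thesis unfolding vld_def by simp
    next
      case False
      have "i + c i \<le> n" using lin_bound[OF False il(1)] .
      then show ?thesis using u il unfolding vld_def by simp
    qed
    have "nat (int u mod int n) = u mod n" by (metis nat_int zmod_int)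
    then have rs: "rep n (int u) (int u + 1) = simple n u" unfolding rep_def simple_def by simp
    have pu: "pdim n c (simple n u) = PD (int u) (int u + 1)"
      using pdim_rep[OF vu, of "int u + 1"] F_gt[of "int u"] rs by simp
    obtain q where q: "PD (int u) (int u + 1) = enat q" "odd q"
      using SUB[OF k ab, of "int u" "int u + 1"] u unfolding a_def b_def by auto
    have "odd_module n c (simple n u)" unfolding odd_module_def using pu q by auto
    then show ?thesis using pu q unfolding g_def u_def by simp
  qed
  have "char_seq n c M = map (\<lambda>j. if odd_module n c (simple n (i + l - j)) then pdim n c (simple n (i + l - j)) else pdim n c M) [1..<l+1]"
    unfolding char_seq_def comp_factors_def by (simp add: M)
  also have "\<dots> = map g [1..<l+1]"
  proof (rule map_cong)
    fix j assume "j \<in> set [1..<l+1]"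
    then have "1 \<le> j" "j \<le> l" by auto
    then show "(if odd_module n c (simple n (i + l - j)) then pdim n c (simple n (i + l - j)) else pdim n c M) = g j"
      using ent by blast
  qed simp
  finally have cs: "char_seq n c M = map g [1..<l+1]" .
  have part1: "\<forall>z\<in>set (char_seq n c M). \<exists>k. z = enat k \<and> odd k"
    unfolding cs using ent by auto
  have "sorted_wrt (\<lambda>x y. g y \<le> g x) [1..<l+1]"
  proof (rule sorted_wrt_mono_rel[of _ "(<)"])
    fix x y assume xy: "x \<in> set [1..<l+1]" "y \<in> set [1..<l+1]" "x < y"
    have "PD (int (i + l - y)) (int (i + l - y) + 1) \<le> PD (int (i + l - x)) (int (i + l - x) + 1)"
      using CHAIN[OF k ab, of "int (i + l - y)" "int (i + l - x)"] xy unfolding a_def b_def by auto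
    then show "g y \<le> g x" unfolding g_def .
  qed (rule sorted_wrt_upt)
  then have "sorted_wrt (\<ge>) (map g [1..<l+1])" by (simp add: sorted_wrt_map)
  then show ?thesis using part1 cs by simp
qed

end

theorem proposition7p1:
  fixes cyc :: bool and n :: nat and c :: "nat \<Rightarrow> nat" and d :: nat and M :: "nat \<times> nat"
  assumes "is_nakayama cyc n c"
    and "higher_auslander cyc n c"
    and "gldim n c = enat d" and "odd d"
    and "is_module n c M" and "odd_module n c M"
  shows "(\<forall>z\<in>set (char_seq n c M). \<exists>k. z = enat k \<and> odd k)
         \<and> sorted_wrt (\<ge>) (char_seq n c M)"
proof -
  interpret conc2 cyc n c d
    by (rule conc2.intro, rule conc.intro, rule assms(1), unfold_locales) (use assms in auto)
  show ?thesis using final assms by simp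
qed

end
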